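(* Let $K$ be a field with $\operatorname{char}(K)=0$ and let $f\in K[x]$ have at least two distinct critical points and equal critical values at at most two distinct critical points. Suppose $f(x)=g(h(x))$ with $g,h\in K[x]$ and $t=\deg g>1$, and put $k=\deg h$. Then either $k\leq 2$, or \[ f'(x)=a'(x-x_0)^{k_0t-1}(x-x_1)^{k_1t-1}(kx-k_0x_1-k_1x_0) \] for some $a'\in K$, integers $k_0,k_1\geq 1$ with $k_0+k_1=k\geq 3$ and distinct $x_0,x_1\in\overline{K}$, or \[ f'(x)=a'(x-x_0)^{2t_0+1}(x-x_1)^{t_0}(x-y_0)^{2t_1+1}(x-y_1)^{t_1} \] with $a'\in K$, $\deg h=3$, integers $t_0,t_1\geq 1$ with $t_0+t_1=t-1$, and distinct $x_0,x_1,y_0,y_1\in\overline{K}$ satisfying $3x_0-y_0=2y_1$ and $3y_0-x_0=2x_1$.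
   Context: Critical points of $f$ are the roots of $f'$ in an algebraic closure $\overline{K}$, and critical values are values of $f$ at critical points. "$f$ has equal critical values at at most two distinct critical points" means there do not exist three pairwise distinct critical points $\beta_1,\beta_2,\beta_3$ of $f$ with $f(\beta_1)=f(\beta_2)=f(\beta_3)$. *)

theory Defs
  imports "HOL-Computational_Algebra.Polynomial" "HOL-Algebra.Algebraic_Closure_Type"
begin

definition crit_points :: "'a::field poly \<Rightarrow> 'a alg_closure set" where
  "crit_points f = {b. poly (map_poly to_ac (pderiv f)) b = 0}"

definition ac_eval :: "'a::field poly \<Rightarrow> 'a alg_closure \<Rightarrow> 'a alg_closure" where
  "ac_eval f b = poly (map_poly to_ac f) b"

end

theory Submission
  imports Defs
begin


lemma map_poly_to_ac_add: "map_poly to_ac (p + q) = map_poly to_ac p + map_poly to_ac (q :: 'a::field poly)"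
  by (rule poly_eqI) (simp add: coeff_map_poly)

lemma map_poly_to_ac_mult: "map_poly to_ac (p * q) = map_poly to_ac p * map_poly to_ac (q :: 'a::field poly)"
  by (rule poly_eqI) (simp add: coeff_map_poly coeff_mult to_ac_sum)

lemma map_poly_to_ac_pderiv: "map_poly to_ac (pderiv p) = pderiv (map_poly to_ac (p :: 'a::field poly))"
  by (rule poly_eqI) (simp add: coeff_map_poly coeff_pderiv)

lemma map_poly_to_ac_pcompose: "map_poly to_ac (pcompose p q) = pcompose (map_poly to_ac p) (map_poly to_ac (q :: 'a::field poly))"
  by (induction p rule: pCons_induct)
     (simp_all add: pcompose_pCons map_poly_pCons map_poly_to_ac_add map_poly_to_ac_mult)

lemma degree_map_poly_to_ac [simp]: "degree (map_poly to_ac (p :: 'a::field poly)) = degree p"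
  by (rule degree_map_poly) simp

lemma lead_coeff_map_poly_to_ac [simp]: "lead_coeff (map_poly to_ac (p :: 'a::field poly)) = to_ac (lead_coeff p)"
  by (simp add: coeff_map_poly)



lemma prod_mset_count: "(\<Prod>x\<in>#A. f x) = (\<Prod>x\<in>set_mset A. (f x :: 'c::comm_monoid_mult) ^ count A x)"
proof (induction A)
  case empty then show ?case by simp
next
  case (add a A)
  show ?case
  proof (cases "a \<in># A")
    case True
    have "(\<Prod>x\<in>set_mset (add_mset a A). f x ^ count (add_mset a A) x)
        = f a ^ count (add_mset a A) a * (\<Prod>x\<in>set_mset A - {a}. f x ^ count (add_mset a A) x)"
      using True by (simp add: prod.remove insert_absorb)
    also have "(\<Prod>x\<in>set_mset A - {a}. f x ^ count (add_mset a A) x) = (\<Prod>x\<in>set_mset A - {a}. f x ^ count A x)"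
      by (rule prod.cong) auto
    also have "(\<Prod>x\<in>set_mset A. f x ^ count A x) = f a ^ count A a * (\<Prod>x\<in>set_mset A - {a}. f x ^ count A x)"
      using True by (simp add: prod.remove)
    ultimately show ?thesis using add.IH by (simp add: mult_ac)
  next
    case False
    have "(\<Prod>x\<in>set_mset A. f x ^ count (add_mset a A) x) = (\<Prod>x\<in>set_mset A. f x ^ count A x)"
      using False by (intro prod.cong) auto
    then show ?thesis using False add.IH by (simp add: not_in_iff)
  qed
qed

lemma order_prod_lin:
  fixes n :: "'b::idom \<Rightarrow> nat"
  assumes "finite S"
  shows "order z (\<Prod>w\<in>S. [:-w,1:]^n w) = (if z \<in> S then n z else 0)"
  using assms
proof (induction S rule: finite_induct)
  case empty then show ?case by simp
next
  case (insert w S)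
  have nz: "(\<Prod>w\<in>S. [:-w,1:]^n w) \<noteq> (0 :: 'b poly)"
    by (simp add: prod_zero_iff[OF insert.hyps(1)])
  have "order z (\<Prod>w\<in>insert w S. [:-w,1:]^n w) = order z ([:-w,1:]^n w) + order z (\<Prod>w\<in>S. [:-w,1:]^n w)"
    using insert.hyps nz by (simp add: order_mult)
  also have "order z ([:-w,1:]^n w) = (if z = w then n w else 0)"
  proof (cases "z = w")
    case True then show ?thesis by (simp add: order_power_n_n)
  next
    case False
    then have "poly ([:-w,1:]^n w) z \<noteq> 0" by simp
    then show ?thesis using False by (simp add: order_0I)
  qed
  finally show ?case using insert.IH insert.hyps by auto
qed

definition proots :: "'b::idom poly \<Rightarrow> 'b set" where "proots p = {z. poly p z = 0}"

lemma factor_roots: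
  fixes p :: "'b::alg_closed_field poly"
  assumes "p \<noteq> 0"
  shows "p = smult (lead_coeff p) (\<Prod>z\<in>proots p. [:-z,1:]^order z p)"
    and "degree p = (\<Sum>z\<in>proots p. order z p)"
proof -
  obtain A where A: "size A = degree p" "p = smult (lead_coeff p) (\<Prod>x\<in>#A. [:-x, 1:])"
    using alg_closed_imp_factorization[OF assms] by blast
  have P: "(\<Prod>x\<in>#A. [:-x, 1:]) = (\<Prod>x\<in>set_mset A. [:-x, 1:] ^ count A x)"
    by (rule prod_mset_count)
  have lc: "lead_coeff p \<noteq> 0" using assms by simp
  have ord: "order z p = count A z" for z
  proof -
    have "order z p = order z (\<Prod>x\<in>set_mset A. [:-x, 1:] ^ count A x)"
      using A(2) P lc by (metis order_smult)
    also have "\<dots> = count A z" by (subst order_prod_lin) (auto simp: not_in_iff)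
    finally show ?thesis .
  qed
  have R: "proots p = set_mset A"
    using assms by (auto simp: proots_def order_root ord)
  show "p = smult (lead_coeff p) (\<Prod>z\<in>proots p. [:-z,1:]^order z p)"
    using A(2) P R ord by simp
  have "degree p = size A" using A by simp
  also have "\<dots> = (\<Sum>x\<in>set_mset A. count A x)" by (simp add: size_multiset_overloaded_eq)
  finally show "degree p = (\<Sum>z\<in>proots p. order z p)" using R ord by simp
qed



lemma pcompose_lin_power: "pcompose ([:-c,1:]^n) H = (H - [:c::'b::field:])^n"
proof (induction n)
  case 0 then show ?case by (simp add: pcompose_1)
next
  case (Suc n)
  have "pcompose [:-c,1:] H = [:-c:] + H" by (simp add: pcompose_pCons)
  also have "\<dots> = H - [:c:]" by (rule poly_eqI) (auto simp: coeff_pCons split: nat.split)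
  finally have "pcompose [:-c,1:] H = H - [:c:]" .
  then show ?case unfolding power_Suc pcompose_mult Suc.IH by simp
qed

lemma prod_rule_gen:
  fixes P Q :: "'b::field poly"
  shows "P^Suc i * smult m (Q^j) + Q^Suc j * smult n (P^i) = P^i*Q^j*(smult m P + smult n Q)"
  by (simp add: algebra_simps)

lemma pderiv_two:
  fixes x0 x1 :: "'b::field"
  shows "pderiv ([:-x0,1:]^Suc i * [:-x1,1:]^Suc j) =
    [:-x0,1:]^i * [:-x1,1:]^j * [:-(of_nat (Suc i) * x1 + of_nat (Suc j) * x0), of_nat (Suc i + Suc j):]"
proof -
  have L: "smult (of_nat (Suc j)) [:-x0,1:] + smult (of_nat (Suc i)) [:-x1,1:] =
     [:-(of_nat (Suc i) * x1 + of_nat (Suc j) * x0), of_nat (Suc i + Suc j) :: 'b:]"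
    by (simp add: algebra_simps)
  have d0: "pderiv ([:-x0,1:]^Suc i) = smult (of_nat (Suc i)) ([:-x0,1:]^i)"
    by (simp add: pderiv_power_Suc pderiv_pCons del: power_Suc)
  have d1: "pderiv ([:-x1,1:]^Suc j) = smult (of_nat (Suc j)) ([:-x1,1:]^j)"
    by (simp add: pderiv_power_Suc pderiv_pCons del: power_Suc)
  have "pderiv ([:-x0,1:]^Suc i * [:-x1,1:]^Suc j) =
     [:-x0,1:]^Suc i * smult (of_nat (Suc j)) ([:-x1,1:]^j) + [:-x1,1:]^Suc j * smult (of_nat (Suc i)) ([:-x0,1:]^i)"
    unfolding pderiv_mult d0 d1 ..
  also have "\<dots> = [:-x0,1:]^i * [:-x1,1:]^j * (smult (of_nat (Suc j)) [:-x0,1:] + smult (of_nat (Suc i)) [:-x1,1:])"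
    by (rule prod_rule_gen)
  finally show ?thesis unfolding L .
qed

lemma caseA_gen:
  fixes A B P Q L :: "'b::field poly"
  shows "smult a ((smult b (A*B))^s) * smult b (P*Q*L) = smult (a*b^Suc s) ((P*A^s) * (Q*B^s) * L)"
  by (simp add: power_mult_distrib smult_power mult_ac)

lemma caseA_alg:
  fixes X0 X1 L :: "'b::field poly"
  shows "smult a ((smult b (X0^Suc i0 * X1^Suc i1))^s) * smult b (X0^i0 * X1^i1 * L) =
    smult (a * b^Suc s) (X0^(Suc i0 * Suc s - 1) * X1^(Suc i1 * Suc s - 1) * L)"
proof -
  have n0: "Suc i0 * Suc s - 1 = i0 + Suc i0 * s" by simp
  have e0: "X0^(Suc i0 * Suc s - 1) = X0^i0 * (X0^Suc i0)^s"
    using n0 by (simp only: power_add power_mult)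
  have n1: "Suc i1 * Suc s - 1 = i1 + Suc i1 * s" by simp
  have e1: "X1^(Suc i1 * Suc s - 1) = X1^i1 * (X1^Suc i1)^s"
    using n1 by (simp only: power_add power_mult)
  show ?thesis unfolding e0 e1 by (rule caseA_gen)
qed

lemma poly_pderiv_sq:
  fixes x0 x1 :: "'b::field"
  shows "poly (pderiv ([:-x0,1:]^2 * [:-x1,1:])) y = (y - x0) * (3*y - x0 - 2*x1)"
  by (simp add: pderiv_mult pderiv_power pderiv_pCons power2_eq_square algebra_simps)

lemma caseB_gen:
  fixes A B X0 X1 Y0 Y1 :: "'b::field poly"
  shows "smult a ((smult b (A * X1))^t0 * (smult b (B * Y1))^t1) * smult (3*b) (X0 * Y0) =
    smult (3 * a * b^(t0 + t1 + 1)) ((X0 * A^t0) * X1^t0 * (Y0 * B^t1) * Y1^t1)"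
  by (simp add: power_add power_mult_distrib smult_power mult_ac)

lemma caseB_alg:
  fixes X0 X1 Y0 Y1 :: "'b::field poly"
  shows "smult a ((smult b (X0^2 * X1))^t0 * (smult b (Y0^2 * Y1))^t1) * smult (3*b) (X0 * Y0) =
    smult (3 * a * b^(t0 + t1 + 1)) (X0^(2*t0+1) * X1^t0 * Y0^(2*t1+1) * Y1^t1)"
proof -
  have e0: "X0^(2*t0+1) = X0 * (X0^2)^t0" by (simp add: power_mult[symmetric] power_add mult.commute)
  have e1: "Y0^(2*t1+1) = Y0 * (Y0^2)^t1" by (simp add: power_mult[symmetric] power_add mult.commute)
  show ?thesis unfolding e0 e1 by (rule caseB_gen[where A="X0^2" and B="Y0^2"])
qed


lemma sum_order_le_degree:
  fixes p :: "'b::alg_closed_field poly"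
  assumes "p \<noteq> 0" "finite S"
  shows "(\<Sum>z\<in>S. order z p) \<le> degree p"
proof -
  have fin: "finite (proots p)" using poly_roots_finite[OF assms(1)] by (simp add: proots_def)
  have "(\<Sum>z\<in>S. order z p) = (\<Sum>z\<in>S \<inter> proots p. order z p)"
    using assms by (intro sum.mono_neutral_right) (auto simp: proots_def order_root)
  also have "\<dots> \<le> (\<Sum>z\<in>proots p. order z p)" using fin by (intro sum_mono2) auto
  also have "\<dots> = degree p" using factor_roots(2)[OF assms(1)] by simp
  finally show ?thesis .
qed

lemma core:
  fixes G H :: "'b::{alg_closed_field,field_char_0} poly"
  assumes crit: "\<exists>b1 b2. b1 \<noteq> b2 \<and> poly (pderiv (pcompose G H)) b1 = 0 \<and> poly (pderiv (pcompose G H)) b2 = 0"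
    and atm: "\<not>(\<exists>b1 b2 b3. b1 \<noteq> b2 \<and> b1 \<noteq> b3 \<and> b2 \<noteq> b3 \<and> poly (pderiv (pcompose G H)) b1 = 0 \<and>
       poly (pderiv (pcompose G H)) b2 = 0 \<and> poly (pderiv (pcompose G H)) b3 = 0 \<and>
       poly (pcompose G H) b1 = poly (pcompose G H) b2 \<and> poly (pcompose G H) b1 = poly (pcompose G H) b3)"
    and tg: "degree G > 1" and kg: "degree H \<ge> 3"
  shows "(\<exists>k0 k1 x0 x1. k0 \<ge> 1 \<and> k1 \<ge> 1 \<and> k0 + k1 = degree H \<and> x0 \<noteq> x1 \<and>
           pderiv (pcompose G H) = smult (lead_coeff (pderiv G) * lead_coeff H ^ degree G)
             ([:-x0, 1:] ^ (k0 * degree G - 1) * [:-x1, 1:] ^ (k1 * degree G - 1) *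
              [:-(of_nat k0 * x1 + of_nat k1 * x0), of_nat (degree H):]))
       \<or> (\<exists>t0 t1 x0 x1 y0 y1. degree H = 3 \<and> t0 \<ge> 1 \<and> t1 \<ge> 1 \<and> t0 + t1 = degree G - 1 \<and>
           distinct [x0, x1, y0, y1] \<and> 3 * x0 - y0 = 2 * y1 \<and> 3 * y0 - x0 = 2 * x1 \<and>
           pderiv (pcompose G H) = smult (3 * lead_coeff (pderiv G) * lead_coeff H ^ degree G)
             ([:-x0, 1:] ^ (2 * t0 + 1) * [:-x1, 1:] ^ t0 * [:-y0, 1:] ^ (2 * t1 + 1) * [:-y1, 1:] ^ t1))"
proof -
  define F where "F = pcompose G H"
  define t where "t = degree G"
  define k where "k = degree H"
  define G' where "G' = pderiv G"
  define H' where "H' = pderiv H"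
  define a where "a = lead_coeff G'"
  define b where "b = lead_coeff H"
  define C where "C = proots G'"
  define Hc where "Hc c = H - [:c:]" for c
  define R where "R c = proots (Hc c)" for c
  have G'nz: "G' \<noteq> 0" using tg by (simp add: G'_def pderiv_eq_0_iff)
  have H'nz: "H' \<noteq> 0" using kg by (simp add: H'_def pderiv_eq_0_iff)
  have degG': "degree G' = t - 1" by (simp add: G'_def t_def degree_pderiv)
  have degH': "degree H' = k - 1" by (simp add: H'_def k_def degree_pderiv)
  have Hnz: "H \<noteq> 0" using kg by auto
  have bnz: "b \<noteq> 0" using Hnz by (simp add: b_def)
  have F': "pderiv F = pcompose G' H * H'" by (simp add: F_def G'_def H'_def pderiv_pcompose)
  have polyF': "poly (pderiv F) z = poly G' (poly H z) * poly H' z" for z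
    by (simp add: F' poly_pcompose)
  have polyF: "poly F z = poly G (poly H z)" for z by (simp add: F_def poly_pcompose)
  have Hc_poly: "poly (Hc c) z = poly H z - c" for c z by (simp add: Hc_def)
  have "k \<noteq> 0" using kg k_def by simp
  then obtain m where km: "k = Suc m" using not0_implies_Suc by blast
  have Hc_coeff: "coeff (Hc c) k = b" for c by (simp add: Hc_def km b_def k_def[symmetric])
  have Hc_deg: "degree (Hc c) = k" for c
  proof (rule antisym)
    show "degree (Hc c) \<le> k" unfolding Hc_def using km by (intro degree_diff_le) (auto simp: k_def)
    show "k \<le> degree (Hc c)" using Hc_coeff[of c] bnz by (intro le_degree) simp
  qed
  have Hc_nz: "Hc c \<noteq> 0" for c using Hc_deg[of c] km by auto
  have Hc_lc: "lead_coeff (Hc c) = b" for c using Hc_deg Hc_coeff by simp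
  have Hc_der: "pderiv (Hc c) = H'" for c by (simp add: Hc_def H'_def pderiv_diff)
  have R_fin: "finite (R c)" for c using poly_roots_finite[OF Hc_nz] by (simp add: R_def proots_def)
  have R_mem: "z \<in> R c \<longleftrightarrow> poly H z = c" for z c by (simp add: R_def proots_def Hc_poly)
  have C_fin: "finite C" using poly_roots_finite[OF G'nz] by (simp add: C_def proots_def)
  have C_mem: "c \<in> C \<longleftrightarrow> poly G' c = 0" for c by (simp add: C_def proots_def)
  have atm': "\<not>(\<exists>b1 b2 b3. b1 \<noteq> b2 \<and> b1 \<noteq> b3 \<and> b2 \<noteq> b3 \<and> poly (pderiv F) b1 = 0 \<and>
       poly (pderiv F) b2 = 0 \<and> poly (pderiv F) b3 = 0 \<and>
       poly F b1 = poly F b2 \<and> poly F b1 = poly F b3)" using atm by (simp add: F_def)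
  have cardR: "card (R c) \<le> 2" if "c \<in> C" for c
  proof (rule ccontr)
    assume "\<not> card (R c) \<le> 2"
    then have "3 \<le> card (R c)" by simp
    then obtain T where T: "T \<subseteq> R c" "card T = 3" by (metis obtain_subset_with_card_n)
    then obtain x y z where xyz: "T = {x,y,z}" "x\<noteq>y" "y\<noteq>z" "x\<noteq>z" by (auto simp: card_3_iff)
    have "x \<in> R c" "y \<in> R c" "z \<in> R c" using T xyz by auto
    then have Hv: "poly H x = c" "poly H y = c" "poly H z = c" by (auto simp: R_mem)
    have Gc: "poly G' c = 0" using that C_mem by simp
    have "\<exists>b1 b2 b3. b1 \<noteq> b2 \<and> b1 \<noteq> b3 \<and> b2 \<noteq> b3 \<and> poly (pderiv F) b1 = 0 \<and>
       poly (pderiv F) b2 = 0 \<and> poly (pderiv F) b3 = 0 \<and>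
       poly F b1 = poly F b2 \<and> poly F b1 = poly F b3"
      by (intro exI[of _ x] exI[of _ y] exI[of _ z]) (simp add: xyz polyF' polyF Hv Gc)
    then show False using atm' by blast
  qed
  have sumR: "(\<Sum>z\<in>R c. order z H') + card (R c) = k" for c
  proof -
    have "k = (\<Sum>z\<in>R c. order z (Hc c))" using factor_roots(2)[OF Hc_nz] Hc_deg by (simp add: R_def)
    also have "\<dots> = (\<Sum>z\<in>R c. Suc (order z H'))"
    proof (intro sum.cong refl)
      fix z assume "z \<in> R c"
      then have "poly (Hc c) z = 0" by (simp add: R_def proots_def)
      then show "order z (Hc c) = Suc (order z H')" using order_pderiv[OF Hc_nz] Hc_der by metis
    qed
    also have "\<dots> = (\<Sum>z\<in>R c. order z H') + card (R c)" by (simp add: sum_Suc)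
    finally show ?thesis by simp
  qed
  have disj: "\<forall>i\<in>C. \<forall>j\<in>C. i \<noteq> j \<longrightarrow> R i \<inter> R j = {}" by (auto simp: R_mem)
  have total: "(\<Sum>c\<in>C. \<Sum>z\<in>R c. order z H') \<le> k - 1"
  proof -
    have "(\<Sum>c\<in>C. \<Sum>z\<in>R c. order z H') = (\<Sum>z\<in>\<Union>(R ` C). order z H')"
      by (subst sum.UNION_disjoint[OF C_fin _ disj]) (auto simp: R_fin)
    also have "\<dots> \<le> degree H'" using C_fin R_fin by (intro sum_order_le_degree H'nz) auto
    finally show ?thesis using degH' by simp
  qed
  have each: "k - 2 \<le> (\<Sum>z\<in>R c. order z H')" if "c \<in> C" for c
    using sumR[of c] cardR[OF that] by linarith
  have cardC: "card C * (k - 2) \<le> k - 1"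
  proof -
    have "card C * (k-2) = (\<Sum>c\<in>C. k - 2)" by simp
    also have "\<dots> \<le> (\<Sum>c\<in>C. \<Sum>z\<in>R c. order z H')" by (intro sum_mono each)
    finally show ?thesis using total by linarith
  qed
  have Cne: "C \<noteq> {}"
  proof -
    have "degree G' > 0" using degG' tg t_def by simp
    then obtain c where "poly G' c = 0" using alg_closed_imp_poly_has_root by blast
    then show ?thesis by (auto simp: C_mem)
  qed
  have cC1: "card C \<ge> 1" using Cne C_fin by (simp add: Suc_le_eq card_gt_0_iff)
  have cC2: "card C \<le> 2"
  proof (rule ccontr)
    assume "\<not> card C \<le> 2"
    then have "3 * (k-2) \<le> card C * (k-2)" by (intro mult_right_mono) auto
    then show False using cardC kg k_def by linarith
  qed
  have factG': "G' = smult a (\<Prod>c\<in>C. [:-c,1:]^order c G')"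
    using factor_roots(1)[OF G'nz] by (simp add: a_def C_def)
  have degG'sum: "t - 1 = (\<Sum>c\<in>C. order c G')" using factor_roots(2)[OF G'nz] degG' by (simp add: C_def)
  have factHc: "Hc c = smult b (\<Prod>z\<in>R c. [:-z,1:]^order z (Hc c))" for c
    using factor_roots(1)[OF Hc_nz] Hc_lc by (simp add: R_def)
  have ordR: "order z (Hc c) \<ge> 1" if "z \<in> R c" for z c
    using that Hc_nz[of c] order_root[of "Hc c" z] by (simp add: R_def proots_def)
  have ordC: "order c G' \<ge> 1" if "c \<in> C" for c
    using that G'nz order_root[of G' c] by (simp add: C_def proots_def)
  have sumHc: "(\<Sum>z\<in>R c. order z (Hc c)) = k" for c
    using factor_roots(2)[OF Hc_nz] Hc_deg by (simp add: R_def)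
  have compG': "pcompose G' H = smult a (\<Prod>c\<in>C. (Hc c)^order c G')"
    by (subst factG') (simp add: pcompose_smult pcompose_prod pcompose_lin_power Hc_def)
  have main: "(\<exists>k0 k1 x0 x1. k0 \<ge> 1 \<and> k1 \<ge> 1 \<and> k0 + k1 = k \<and> x0 \<noteq> x1 \<and>
           pderiv F = smult (a * b ^ t)
             ([:-x0, 1:] ^ (k0 * t - 1) * [:-x1, 1:] ^ (k1 * t - 1) *
              [:-(of_nat k0 * x1 + of_nat k1 * x0), of_nat k:]))
       \<or> (\<exists>t0 t1 x0 x1 y0 y1. k = 3 \<and> t0 \<ge> 1 \<and> t1 \<ge> 1 \<and> t0 + t1 = t - 1 \<and>
           distinct [x0, x1, y0, y1] \<and> 3 * x0 - y0 = 2 * y1 \<and> 3 * y0 - x0 = 2 * x1 \<and>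
           pderiv F = smult (3 * a * b ^ t)
             ([:-x0, 1:] ^ (2 * t0 + 1) * [:-x1, 1:] ^ t0 * [:-y0, 1:] ^ (2 * t1 + 1) * [:-y1, 1:] ^ t1))"
  proof (cases "card C = 1")
    case True
    then obtain c where Cc: "C = {c}" by (auto simp: card_1_singleton_iff)
    have ordc: "order c G' = t - 1" using degG'sum Cc by simp
    have compG'1: "pcompose G' H = smult a ((Hc c)^(t-1))" using compG' Cc ordc by simp
    have cR: "card (R c) \<le> 2" using cardR Cc by simp
    have cR0: "card (R c) \<noteq> 0"
    proof
      assume "card (R c) = 0"
      then have "R c = {}" using R_fin by simp
      then show False using sumHc[of c] km by simp
    qed
    have cR1: "card (R c) \<noteq> 1"
    proof
      assume "card (R c) = 1"
      then obtain x0 where Rx: "R c = {x0}" by (auto simp: card_1_singleton_iff)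
      have ox: "order x0 H' + 1 = k" using sumR[of c] Rx by simp
      obtain b1 b2 where bb: "b1 \<noteq> b2" "poly (pderiv F) b1 = 0" "poly (pderiv F) b2 = 0"
        using crit F_def by auto
      then obtain z where z: "z \<noteq> x0" "poly (pderiv F) z = 0" by metis
      show False
      proof (cases "poly G' (poly H z) = 0")
        case True
        then have "poly H z \<in> C" by (simp add: C_mem)
        then have "z \<in> R c" using Cc by (simp add: R_mem)
        then show False using Rx z by simp
      next
        case False
        then have "poly H' z = 0" using z polyF' by simp
        then have oz: "order z H' \<ge> 1" using H'nz order_root[of H' z] by simp
        have "(\<Sum>w\<in>{x0,z}. order w H') \<le> degree H'" by (intro sum_order_le_degree H'nz) auto
        then show False using z(1) degH' ox oz by simp
      qed
    qed
    have "card (R c) = 2" using cR cR0 cR1 by linarith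
    then obtain x0 x1 where Rx: "R c = {x0,x1}" "x0 \<noteq> x1" by (auto simp: card_2_iff)
    define k0 where "k0 = order x0 (Hc c)"
    define k1 where "k1 = order x1 (Hc c)"
    have k01: "k0 \<ge> 1" "k1 \<ge> 1" using ordR Rx by (auto simp: k0_def k1_def)
    have ksum: "k0 + k1 = k" using sumHc[of c] Rx by (simp add: k0_def k1_def)
    have HcF: "Hc c = smult b ([:-x0,1:]^k0 * [:-x1,1:]^k1)" using factHc[of c] Rx by (simp add: k0_def k1_def)
    obtain i0 i1 where ii: "k0 = Suc i0" "k1 = Suc i1" using k01 by (metis One_nat_def Suc_le_D)
    have "t \<noteq> 0" using tg t_def by simp
    then obtain s where ts: "t = Suc s" using not0_implies_Suc by blast
    define L where "L = [:-(of_nat (Suc i0) * x1 + of_nat (Suc i1) * x0), of_nat (Suc i0 + Suc i1) :: 'b:]"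
    have H'F: "H' = smult b ([:-x0,1:]^i0 * [:-x1,1:]^i1 * L)"
      unfolding L_def by (simp only: Hc_der[symmetric, of c] HcF ii pderiv_smult pderiv_two)
    have "pderiv F = smult a ((Hc c)^s) * H'" using F' compG'1 ts by simp
    also have "\<dots> = smult (a * b ^ t) ([:-x0,1:]^(k0 * t - 1) * [:-x1,1:]^(k1 * t - 1) * L)"
      by (simp only: HcF H'F ii ts caseA_alg)
    finally have "pderiv F = smult (a * b ^ t) ([:-x0,1:]^(k0 * t - 1) * [:-x1,1:]^(k1 * t - 1) * L)" .
    moreover have "L = [:-(of_nat k0 * x1 + of_nat k1 * x0), of_nat k:]"
      unfolding L_def ii ksum[symmetric] by simp
    ultimately show ?thesis using k01 ksum Rx(2) by blast
  next
    case False
    then have c2: "card C = 2" using cC1 cC2 by linarith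
    then obtain c1 c2 where Cc: "C = {c1,c2}" "c1 \<noteq> c2" by (auto simp: card_2_iff)
    have "2 * (k-2) \<le> k - 1" using cardC c2 by simp
    then have k3: "k = 3" using kg k_def by linarith
    have s12: "(\<Sum>z\<in>R c1. order z H') + (\<Sum>z\<in>R c2. order z H') \<le> 2" using total Cc k3 by simp
    have r12: "card (R c1) = 2" "card (R c2) = 2"
      using s12 sumR[of c1] sumR[of c2] cardR[of c1] cardR[of c2] Cc k3 by auto
    have two: "\<exists>x0 x1. x0 \<noteq> x1 \<and> R c = {x0,x1} \<and> order x0 (Hc c) = 2 \<and>
                  Hc c = smult b ([:-x0,1:]^2 * [:-x1,1:])" if c2R: "card (R c) = 2" for c
    proof -
      obtain u v where uv: "R c = {u,v}" "u \<noteq> v" using c2R by (auto simp: card_2_iff)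
      have ou: "order u (Hc c) \<ge> 1" "order v (Hc c) \<ge> 1" using ordR uv by auto
      have os: "order u (Hc c) + order v (Hc c) = 3" using sumHc[of c] uv k3 by simp
      have fac: "Hc c = smult b ([:-u,1:]^order u (Hc c) * [:-v,1:]^order v (Hc c))"
        using factHc[of c] uv by simp
      show ?thesis
      proof (cases "order u (Hc c) = 2")
        case True
        then have "order v (Hc c) = 1" using os by simp
        then show ?thesis using True fac uv by (intro exI[of _ u] exI[of _ v]) simp
      next
        case False
        then have "order u (Hc c) = 1" "order v (Hc c) = 2" using os ou by auto
        then show ?thesis using fac uv
          by (intro exI[of _ v] exI[of _ u]) (simp add: insert_commute mult.commute)
      qed
    qed
    obtain x0 x1 where X: "x0 \<noteq> x1" "R c1 = {x0,x1}" "order x0 (Hc c1) = 2"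
        "Hc c1 = smult b ([:-x0,1:]^2 * [:-x1,1:])" using two[OF r12(1)] by blast
    obtain y0 y1 where Y: "y0 \<noteq> y1" "R c2 = {y0,y1}" "order y0 (Hc c2) = 2"
        "Hc c2 = smult b ([:-y0,1:]^2 * [:-y1,1:])" using two[OF r12(2)] by blast
    have Hv: "poly H x0 = c1" "poly H x1 = c1" "poly H y0 = c2" "poly H y1 = c2"
      using X(2) Y(2) R_mem by blast+
    have dist: "distinct [x0,x1,y0,y1]" using X(1) Y(1) Hv Cc(2) by auto
    have ox0: "order x0 H' = 1"
    proof -
      have "poly (Hc c1) x0 = 0" using Hv by (simp add: Hc_poly)
      then have "order x0 (Hc c1) = Suc (order x0 H')" using order_pderiv[OF Hc_nz] Hc_der by metis
      then show ?thesis using X(3) by simp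
    qed
    have oy0: "order y0 H' = 1"
    proof -
      have "poly (Hc c2) y0 = 0" using Hv by (simp add: Hc_poly)
      then have "order y0 (Hc c2) = Suc (order y0 H')" using order_pderiv[OF Hc_nz] Hc_der by metis
      then show ?thesis using Y(3) by simp
    qed
    have rootsH': "proots H' = {x0,y0}"
    proof
      show "{x0,y0} \<subseteq> proots H'" using ox0 oy0 H'nz order_root[of H'] by (auto simp: proots_def)
      show "proots H' \<subseteq> {x0,y0}"
      proof
        fix z assume "z \<in> proots H'"
        then have oz: "order z H' \<ge> 1" using H'nz order_root[of H' z] by (simp add: proots_def)
        show "z \<in> {x0,y0}"
        proof (rule ccontr)
          assume nz: "z \<notin> {x0,y0}"
          have "(\<Sum>w\<in>{x0,y0,z}. order w H') \<le> degree H'" by (intro sum_order_le_degree H'nz) auto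
          moreover have "(\<Sum>w\<in>{x0,y0,z}. order w H') = order x0 H' + (order y0 H' + order z H')"
            using nz dist by (subst sum.insert, auto)+
          ultimately show False using ox0 oy0 oz degH' k3 by simp
        qed
      qed
    qed
    have lcH': "lead_coeff H' = 3 * b"
    proof -
      have "lead_coeff H' = coeff H' 2" using degH' k3 by simp
      also have "\<dots> = of_nat 3 * coeff H 3" by (simp add: H'_def coeff_pderiv)
      also have "coeff H 3 = b" using k3 by (simp add: b_def k_def)
      finally show ?thesis by simp
    qed
    have H'F: "H' = smult (3*b) ([:-x0,1:] * [:-y0,1:])"
      using factor_roots(1)[OF H'nz] rootsH' ox0 oy0 lcH' dist by simp
    define t0 where "t0 = order c1 G'"
    define t1 where "t1 = order c2 G'"
    have t01: "t0 \<ge> 1" "t1 \<ge> 1" using ordC Cc by (auto simp: t0_def t1_def)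
    have tsum: "t0 + t1 = t - 1" using degG'sum Cc by (simp add: t0_def t1_def)
    have tt: "t = t0 + t1 + 1" using tsum tg t_def by simp
    have compG'2: "pcompose G' H = smult a ((Hc c1)^t0 * (Hc c2)^t1)"
      using compG' Cc by (simp add: t0_def t1_def)
    have rel1: "3 * y0 - x0 = 2 * x1"
    proof -
      have "y0 \<in> proots H'" using rootsH' by simp
      then have "poly H' y0 = 0" by (simp add: proots_def)
      then have "b * ((y0 - x0) * (3*y0 - x0 - 2*x1)) = 0"
      proof -
        have "H' = pderiv (Hc c1)" using Hc_der by simp
        also have "\<dots> = smult b (pderiv ([:-x0,1:]^2 * [:-x1,1:]))" by (simp only: X(4) pderiv_smult)
        finally have "poly H' y0 = b * ((y0 - x0) * (3*y0 - x0 - 2*x1))" by (simp only: poly_smult poly_pderiv_sq)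
        then show ?thesis using \<open>poly H' y0 = 0\<close> by simp
      qed
      then have "3*y0 - x0 - 2*x1 = 0" using bnz dist by auto
      then show ?thesis by (simp add: algebra_simps)
    qed
    have rel2: "3 * x0 - y0 = 2 * y1"
    proof -
      have "x0 \<in> proots H'" using rootsH' by simp
      then have "poly H' x0 = 0" by (simp add: proots_def)
      then have "b * ((x0 - y0) * (3*x0 - y0 - 2*y1)) = 0"
      proof -
        have "H' = pderiv (Hc c2)" using Hc_der by simp
        also have "\<dots> = smult b (pderiv ([:-y0,1:]^2 * [:-y1,1:]))" by (simp only: Y(4) pderiv_smult)
        finally have "poly H' x0 = b * ((x0 - y0) * (3*x0 - y0 - 2*y1))" by (simp only: poly_smult poly_pderiv_sq)
        then show ?thesis using \<open>poly H' x0 = 0\<close> by simp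
      qed
      then have "3*x0 - y0 - 2*y1 = 0" using bnz dist by auto
      then show ?thesis by (simp add: algebra_simps)
    qed
    have "pderiv F = smult a ((Hc c1)^t0 * (Hc c2)^t1) * H'" using F' compG'2 by simp
    also have "\<dots> = smult (3 * a * b ^ t)
             ([:-x0, 1:] ^ (2 * t0 + 1) * [:-x1, 1:] ^ t0 * [:-y0, 1:] ^ (2 * t1 + 1) * [:-y1, 1:] ^ t1)"
      by (simp only: X(4) Y(4) H'F tt caseB_alg)
    finally have "pderiv F = smult (3 * a * b ^ t)
             ([:-x0, 1:] ^ (2 * t0 + 1) * [:-x1, 1:] ^ t0 * [:-y0, 1:] ^ (2 * t1 + 1) * [:-y1, 1:] ^ t1)" .
    then show ?thesis using k3 t01 tsum dist rel1 rel2 by blast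
  qed
  then show ?thesis by (simp add: F_def t_def k_def a_def b_def G'_def)
qed

theorem proposition1p4:
  fixes f g h :: "'a::field_char_0 poly"
  assumes two_crit: "\<exists>b1\<in>crit_points f. \<exists>b2\<in>crit_points f. b1 \<noteq> b2"
    and at_most_two: "\<not> (\<exists>b1\<in>crit_points f. \<exists>b2\<in>crit_points f. \<exists>b3\<in>crit_points f.
           b1 \<noteq> b2 \<and> b1 \<noteq> b3 \<and> b2 \<noteq> b3 \<and>
           ac_eval f b1 = ac_eval f b2 \<and> ac_eval f b1 = ac_eval f b3)"
    and decomp: "f = pcompose g h"
    and t_gt: "degree g > 1"
  shows "degree h \<le> 2
    \<or> (\<exists>a' k0 k1 x0 x1. k0 \<ge> 1 \<and> k1 \<ge> 1 \<and> k0 + k1 = degree h \<and> degree h \<ge> 3 \<and> x0 \<noteq> x1 \<and>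
         map_poly to_ac (pderiv f) =
           smult (to_ac a') ([:-x0, 1:] ^ (k0 * degree g - 1) * [:-x1, 1:] ^ (k1 * degree g - 1) *
             [:-(of_nat k0 * x1 + of_nat k1 * x0), of_nat (degree h):]))
    \<or> (\<exists>a' t0 t1 x0 x1 y0 y1. degree h = 3 \<and> t0 \<ge> 1 \<and> t1 \<ge> 1 \<and> t0 + t1 = degree g - 1 \<and>
         distinct [x0, x1, y0, y1] \<and> 3 * x0 - y0 = 2 * y1 \<and> 3 * y0 - x0 = 2 * x1 \<and>
         map_poly to_ac (pderiv f) =
           smult (to_ac a') ([:-x0, 1:] ^ (2 * t0 + 1) * [:-x1, 1:] ^ t0 *
             [:-y0, 1:] ^ (2 * t1 + 1) * [:-y1, 1:] ^ t1))"
  proof -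
  consider "degree h \<le> 2" | "degree h \<ge> 3" by linarith
  then show ?thesis
  proof cases
    case 1 then show ?thesis by simp
  next
    case 2
    define G where "G = map_poly to_ac g"
    define H where "H = map_poly to_ac h"
    have Fe: "map_poly to_ac f = pcompose G H" using decomp by (simp add: G_def H_def map_poly_to_ac_pcompose)
    have D: "map_poly to_ac (pderiv f) = pderiv (pcompose G H)" using Fe by (simp add: map_poly_to_ac_pderiv)
    have cp: "crit_points f = {b. poly (pderiv (pcompose G H)) b = 0}" by (simp add: crit_points_def D)
    have ev: "ac_eval f b = poly (pcompose G H) b" for b by (simp add: ac_eval_def Fe)
    have crit: "\<exists>b1 b2. b1 \<noteq> b2 \<and> poly (pderiv (pcompose G H)) b1 = 0 \<and> poly (pderiv (pcompose G H)) b2 = 0"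
      using two_crit cp by auto
    have atm: "\<not>(\<exists>b1 b2 b3. b1 \<noteq> b2 \<and> b1 \<noteq> b3 \<and> b2 \<noteq> b3 \<and> poly (pderiv (pcompose G H)) b1 = 0 \<and>
       poly (pderiv (pcompose G H)) b2 = 0 \<and> poly (pderiv (pcompose G H)) b3 = 0 \<and>
       poly (pcompose G H) b1 = poly (pcompose G H) b2 \<and> poly (pcompose G H) b1 = poly (pcompose G H) b3)"
      using at_most_two unfolding cp ev by auto
    have dG: "degree G = degree g" and dH: "degree H = degree h" by (simp_all add: G_def H_def)
    have tg: "degree G > 1" using t_gt dG by simp
    have kg: "degree H \<ge> 3" using 2 dH by simp
    have lcG': "lead_coeff (pderiv G) = to_ac (lead_coeff (pderiv g))"
      by (simp only: G_def map_poly_to_ac_pderiv[symmetric] lead_coeff_map_poly_to_ac)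
    have lcH: "lead_coeff H = to_ac (lead_coeff h)" by (simp only: H_def lead_coeff_map_poly_to_ac)
    have e1: "to_ac (lead_coeff (pderiv g) * lead_coeff h ^ degree g) = to_ac (lead_coeff (pderiv g)) * to_ac (lead_coeff h) ^ degree g" by simp
    have e2: "to_ac (3 * lead_coeff (pderiv g) * lead_coeff h ^ degree g) = 3 * to_ac (lead_coeff (pderiv g)) * to_ac (lead_coeff h) ^ degree g" by simp
    have R: "(\<exists>k0 k1 x0 x1. k0 \<ge> 1 \<and> k1 \<ge> 1 \<and> k0 + k1 = degree h \<and> x0 \<noteq> x1 \<and>
           map_poly to_ac (pderiv f) = smult (to_ac (lead_coeff (pderiv g) * lead_coeff h ^ degree g))
             ([:-x0, 1:] ^ (k0 * degree g - 1) * [:-x1, 1:] ^ (k1 * degree g - 1) *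
              [:-(of_nat k0 * x1 + of_nat k1 * x0), of_nat (degree h):]))
       \<or> (\<exists>t0 t1 x0 x1 y0 y1. degree h = 3 \<and> t0 \<ge> 1 \<and> t1 \<ge> 1 \<and> t0 + t1 = degree g - 1 \<and>
           distinct [x0, x1, y0, y1] \<and> 3 * x0 - y0 = 2 * y1 \<and> 3 * y0 - x0 = 2 * x1 \<and>
           map_poly to_ac (pderiv f) = smult (to_ac (3 * lead_coeff (pderiv g) * lead_coeff h ^ degree g))
             ([:-x0, 1:] ^ (2 * t0 + 1) * [:-x1, 1:] ^ t0 * [:-y0, 1:] ^ (2 * t1 + 1) * [:-y1, 1:] ^ t1))"
      using core[OF crit atm tg kg] unfolding D e1 e2 lcG' lcH unfolding dG dH .
    show ?thesis
    proof (rule disjI2)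
      from R show "(\<exists>a' k0 k1 x0 x1. k0 \<ge> 1 \<and> k1 \<ge> 1 \<and> k0 + k1 = degree h \<and> degree h \<ge> 3 \<and> x0 \<noteq> x1 \<and>
         map_poly to_ac (pderiv f) =
           smult (to_ac a') ([:-x0, 1:] ^ (k0 * degree g - 1) * [:-x1, 1:] ^ (k1 * degree g - 1) *
             [:-(of_nat k0 * x1 + of_nat k1 * x0), of_nat (degree h):]))
    \<or> (\<exists>a' t0 t1 x0 x1 y0 y1. degree h = 3 \<and> t0 \<ge> 1 \<and> t1 \<ge> 1 \<and> t0 + t1 = degree g - 1 \<and>
         distinct [x0, x1, y0, y1] \<and> 3 * x0 - y0 = 2 * y1 \<and> 3 * y0 - x0 = 2 * x1 \<and>
         map_poly to_ac (pderiv f) =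
           smult (to_ac a') ([:-x0, 1:] ^ (2 * t0 + 1) * [:-x1, 1:] ^ t0 *
             [:-y0, 1:] ^ (2 * t1 + 1) * [:-y1, 1:] ^ t1))"
        using 2 by blast
    qed
  qed
qed

end
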